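(* Let $n\in\mathbb N$, $r>0$, and let $\gamma_1,\gamma_2:[-r,r]\to\mathbb R^m$ be continuous. Let $\epsilon\ne0$ with $n|\epsilon|<r$. Define, for $\gamma\in\{\gamma_1,\gamma_2\}$, $$v_n(\gamma,\epsilon)=\epsilon^{-1}\sum_{k=-n}^n p_{nk}\,\gamma(k\epsilon),$$ where $p_{n0}=0$ and $p_{nk}=\frac{(-1)^{k+1}(n!)^2}{k(n+k)!(n-k)!}$ for $1\le|k|\le n$. Then $$\bigl|v_n(\gamma_2,\epsilon)-v_n(\gamma_1,\epsilon)\bigr|\le |\epsilon|^{-1}H_n\,\|\gamma_2-\gamma_1\|,$$ where $\|\cdot\|$ is the supremum norm on $[-r,r]$ and $H_n=\sum_{k=1}^n k^{-1}$. *)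

theory Defs
  imports "HOL-Analysis.Analysis"
begin

definition pcoef :: "nat \<Rightarrow> int \<Rightarrow> real" where
  "pcoef n k = (if k = 0 \<or> \<bar>k\<bar> > int n then 0
     else ((-1) powi (k + 1)) * (fact n)^2 /
          (real_of_int k * fact (nat (int n + k)) * fact (nat (int n - k))))"

definition vn :: "nat \<Rightarrow> (real \<Rightarrow> 'a::real_normed_vector) \<Rightarrow> real \<Rightarrow> 'a" where
  "vn n \<gamma> \<epsilon> = (1 / \<epsilon>) *\<^sub>R (\<Sum>k\<in>{- int n..int n}. pcoef n k *\<^sub>R \<gamma> (real_of_int k * \<epsilon>))"

definition supnorm_on :: "real \<Rightarrow> (real \<Rightarrow> 'a::real_normed_vector) \<Rightarrow> real" where
  "supnorm_on r f = (SUP t\<in>{-r..r}. norm (f t))"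

end

theory Submission imports Defs begin

definition cc :: "nat \<Rightarrow> nat \<Rightarrow> real" where
  "cc n k = (fact n)^2 / (fact (n+k) * fact (n-k))"
definition gg :: "nat \<Rightarrow> nat \<Rightarrow> real" where
  "gg n j = (if j < n then (fact n)^2 / (2 * fact (n+j) * fact (n-1-j)) else 0)"

lemma tele: "(\<Sum>k=1..(m::nat). h (k-1) - h k) = (h 0 - h m :: real)"
  by (induction m) auto

lemma alg: assumes "F > 0" "A > 0" "B > 0" "x > 0" "mm > 0" "x - mm = 2 * k"
  shows "k * (F / (x * A * (mm * B))) = F / (2 * A * (mm * B)) - F / (2 * (x * A) * (B::real))"
proof -
  have "F / (2 * A * (mm * B)) - F / (2 * (x * A) * B) = F * (x - mm) / (2 * x * A * mm * B)"
    using assms(1-5) by (simp add: field_simps)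
  also have "\<dots> = F * (2 * k) / (2 * x * A * mm * B)" using assms(6) by simp
  also have "\<dots> = k * (F / (x * A * (mm * B)))" using assms(1-5) by (simp add: field_simps)
  finally show ?thesis by simp
qed

lemma kcc: assumes "1 \<le> k" "k \<le> n" shows "real k * cc n k = gg n (k-1) - gg n k"
proof -
  obtain j where j: "k = Suc j" using assms by (cases k) auto
  obtain m where m: "n - j = Suc m" using assms j by (metis Suc_diff_Suc Suc_le_lessD)
  have f1: "fact (n+k) = real (n+k) * fact (n+j)" using j by (simp add: fact_Suc)
  have e1: "n - 1 - j = m" "n - k = m" using m j by auto
  show ?thesis
  proof (cases "k < n")
    case True
    obtain m' where m': "m = Suc m'" using True m j by (cases m) auto
    have f3: "fact m = real m * fact m'" using m' by (simp add: fact_Suc)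
    have e2: "n - 1 - k = m'" using m j m' by auto
    have "gg n k = (fact n)^2 / (2 * (real (n+k) * fact (n+j)) * fact m')" using True e2 f1 by (simp add: gg_def)
    moreover have "gg n (k-1) = (fact n)^2 / (2 * fact (n+j) * (real m * fact m'))" using True e1 j f3 by (simp add: gg_def)
    moreover have "cc n k = (fact n)^2 / (real (n+k) * fact (n+j) * (real m * fact m'))" using e1 f1 f3 by (simp add: cc_def)
    moreover have "real (n+k) - real m = 2 * real k" using m j True by auto
    ultimately show ?thesis using m'
      by (simp only:) (rule alg, auto)
  next
    case False
    then have "k = n" using assms by auto
    then have "m = 0" using m j by auto
    have "n + n - Suc 0 = j + n" using j \<open>k = n\<close> by simp
    then show ?thesis using \<open>k = n\<close> j e1 f1 \<open>n + n - Suc 0 = j + n\<close> by (simp add: gg_def cc_def field_simps)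
  qed
qed

lemma sumk: assumes "n \<ge> 1" shows "(\<Sum>k=1..n. real k * cc n k) = real n / 2"
proof -
  have "(\<Sum>k=1..n. real k * cc n k) = (\<Sum>k=1..n. gg n (k-1) - gg n k)"
    by (rule sum.cong) (auto simp: kcc)
  also have "\<dots> = gg n 0 - gg n n" by (rule tele)
  also have "\<dots> = real n / 2"
  proof -
    obtain p where p: "n = Suc p" using assms by (cases n) auto
    have "gg n 0 = (fact n)^2 / (2 * fact n * fact p)" using p by (simp add: gg_def)
    also have "\<dots> = fact n / (2 * fact p)" by (simp add: power2_eq_square)
    also have "\<dots> = real n / 2" using p by (simp add: fact_Suc)
    finally show ?thesis by (simp add: gg_def)
  qed
  finally show ?thesis .
qed

lemma ccrec: assumes "k \<le> m"
  shows "cc m k / real k = cc (Suc m) k / real k - real k * cc (Suc m) k / (real (Suc m))^2"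
proof -
  define n where "n = Suc m"
  have a1: "fact (n+k) = real (n+k) * fact (m+k)" by (simp add: n_def fact_Suc)
  have "n - k = Suc (m - k)" using assms by (simp add: n_def)
  then have a2: "fact (n-k) = real (n-k) * fact (m-k)" by (simp only: fact_Suc)
  have a3: "fact n = real n * fact m" by (simp add: n_def fact_Suc)
  have r1: "real (n-k) = real n - real k" using assms by (simp add: n_def)
  have pos: "real n - real k > 0" "real n + real k > 0" "real n > 0" using assms by (auto simp: n_def)
  have "cc n k = (real n)^2 * (fact m)^2 / ((real n + real k) * (real n - real k) * (fact (m+k) * fact (m-k)))"
    unfolding cc_def a1 a2 a3 r1 by (simp add: power_mult_distrib field_simps)
  also have "\<dots> = (real n)^2 / ((real n + real k) * (real n - real k)) * cc m k"
    by (simp add: cc_def)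
  finally have e: "cc n k = (real n)^2 / ((real n + real k) * (real n - real k)) * cc m k" .
  have "cc n k * ((real n + real k) * (real n - real k)) = (real n)^2 * cc m k"
  proof -
    have "(real n + real k) * (real n - real k) \<noteq> 0" using pos by simp
    then show ?thesis unfolding e by simp
  qed
  then have e2: "cc m k = cc n k * ((real n + real k) * (real n - real k)) / (real n)^2"
    using pos by (simp add: field_simps)
  show ?thesis
  proof (cases "k = 0")
    case True then show ?thesis by simp
  next
    case False
    then have "real k > 0" by simp
    then show ?thesis unfolding n_def[symmetric] e2
      using pos by (simp add: field_simps power2_eq_square)
  qed
qed

lemma harm_id: "(\<Sum>k=1..n. cc n k / real k) = harm n / 2"
proof (induction n)
  case 0
  then show ?case by (simp add: harm_def)
next
  case (Suc m)
  define n where "n = Suc m"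
  have s1: "(\<Sum>k=1..m. cc m k / real k) = (\<Sum>k=1..m. cc n k / real k - real k * cc n k / (real n)^2)"
  proof (rule sum.cong)
    fix k assume "k \<in> {1..m}"
    then have "k \<le> m" by simp
    from ccrec[OF this] show "cc m k / real k = cc n k / real k - real k * cc n k / (real n)^2"
      unfolding n_def .
  qed simp
  have s2: "(\<Sum>k=1..m. cc n k / real k - real k * cc n k / (real n)^2) = (\<Sum>k=1..m. cc n k / real k) - (\<Sum>k=1..m. real k * cc n k / (real n)^2)"
    by (rule sum_subtractf)
  have s3: "(\<Sum>k=1..n. cc n k / real k) = (\<Sum>k=1..m. cc n k / real k) + cc n n / real n"
    unfolding n_def by (rule sum.cl_ivl_Suc[THEN trans]) simp
  have s4: "(\<Sum>k=1..n. real k * cc n k / (real n)^2) = (\<Sum>k=1..m. real k * cc n k / (real n)^2) + real n * cc n n / (real n)^2"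
    unfolding n_def by (rule sum.cl_ivl_Suc[THEN trans]) simp
  have s5: "(\<Sum>k=1..n. real k * cc n k / (real n)^2) = (real n / 2) / (real n)^2"
  proof -
    have "(\<Sum>k=1..n. real k * cc n k / (real n)^2) = (\<Sum>k=1..n. real k * cc n k) / (real n)^2"
      by (simp add: sum_divide_distrib)
    also have "\<dots> = (real n / 2) / (real n)^2" by (subst sumk) (auto simp: n_def)
    finally show ?thesis .
  qed
  have s6: "real n * cc n n / (real n)^2 = cc n n / real n" by (simp add: n_def power2_eq_square)
  have s7: "(real n / 2) / (real n)^2 = inverse (real n) / 2"
  proof -
    have "real n > 0" by (simp add: n_def)
    then show ?thesis by (simp add: power2_eq_square field_simps)
  qed
  have "(\<Sum>k=1..n. cc n k / real k) = (\<Sum>k=1..m. cc m k / real k) + inverse (real n) / 2"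
    using s1 s2 s3 s4 s5 s6 s7 by linarith
  then show ?case using Suc.IH unfolding n_def by (simp add: harm_Suc)
qed


lemma symsum: "(\<Sum>k\<in>{- int n..int n}. f k) = f 0 + (\<Sum>k=1..n. f (int k) + f (- int k) :: real)"
proof (induction n)
  case 0 then show ?case by simp
next
  case (Suc n)
  have "{- int (Suc n)..int (Suc n)} = insert (int (Suc n)) (insert (- int (Suc n)) {- int n..int n})"
    by auto
  then have "(\<Sum>k\<in>{- int (Suc n)..int (Suc n)}. f k) = f (int (Suc n)) + (f (- int (Suc n)) + (\<Sum>k\<in>{- int n..int n}. f k))"
    by simp
  then show ?case using Suc.IH by simp
qed

lemma abs_pcoef_pos: assumes "1 \<le> k" "k \<le> n" shows "\<bar>pcoef n (int k)\<bar> = cc n k / real k"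
proof -
  have "\<bar>((-1::real) powi (int k + 1))\<bar> = 1" by (simp add: power_int_abs)
  then show ?thesis using assms
    by (simp add: pcoef_def cc_def abs_mult nat_add_distrib nat_diff_distrib field_simps)
qed

lemma abs_pcoef_neg: assumes "1 \<le> k" "k \<le> n" shows "\<bar>pcoef n (- int k)\<bar> = cc n k / real k"
proof -
  have "\<bar>((-1::real) powi (- int k + 1))\<bar> = 1" by (simp add: power_int_abs)
  moreover have "nat (int n + - int k) = n - k" "nat (int n - - int k) = n + k" using assms by auto
  ultimately show ?thesis using assms
    by (simp add: pcoef_def cc_def abs_mult field_simps)
qed

lemma sum_abs_pcoef: "(\<Sum>k\<in>{- int n..int n}. \<bar>pcoef n k\<bar>) = harm n"
proof -
  have "(\<Sum>k\<in>{- int n..int n}. \<bar>pcoef n k\<bar>) = \<bar>pcoef n 0\<bar> + (\<Sum>k=1..n. \<bar>pcoef n (int k)\<bar> + \<bar>pcoef n (- int k)\<bar>)"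
    by (rule symsum)
  also have "\<dots> = (\<Sum>k=1..n. \<bar>pcoef n (int k)\<bar> + \<bar>pcoef n (- int k)\<bar>)"
    by (simp add: pcoef_def)
  also have "\<dots> = (\<Sum>k=1..n. 2 * (cc n k / real k))"
    by (rule sum.cong) (simp_all add: abs_pcoef_pos abs_pcoef_neg)
  also have "\<dots> = 2 * (\<Sum>k=1..n. cc n k / real k)" by (rule sum_distrib_left[symmetric])
  also have "\<dots> = harm n" unfolding harm_id by simp
  finally show ?thesis .
qed

theorem mainTheorem3:
  fixes n :: nat and r \<epsilon> :: real and \<gamma>1 \<gamma>2 :: "real \<Rightarrow> real ^ 'm"
  assumes "r > 0"
    and "continuous_on {-r..r} \<gamma>1" and "continuous_on {-r..r} \<gamma>2"
    and "\<epsilon> \<noteq> 0" and "real n * \<bar>\<epsilon>\<bar> < r"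
  shows "norm (vn n \<gamma>2 \<epsilon> - vn n \<gamma>1 \<epsilon>)
           \<le> (1 / \<bar>\<epsilon>\<bar>) * harm n * supnorm_on r (\<lambda>t. \<gamma>2 t - \<gamma>1 t)"
proof -
  define d where "d = (\<lambda>t. \<gamma>2 t - \<gamma>1 t)"
  define S where "S = supnorm_on r d"
  define K where "K = {- int n..int n}"
  have cont: "continuous_on {-r..r} (\<lambda>t. norm (d t))"
    unfolding d_def by (intro continuous_intros assms(2,3))
  have bdd: "bdd_above ((\<lambda>t. norm (d t)) ` {-r..r})"
    by (intro bounded_imp_bdd_above compact_imp_bounded compact_continuous_image cont) simp
  have bnd: "norm (d (real_of_int k * \<epsilon>)) \<le> S" if "k \<in> K" for k
  proof -
    have "\<bar>real_of_int k\<bar> \<le> real n" using that by (auto simp: K_def)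
    then have "\<bar>real_of_int k * \<epsilon>\<bar> \<le> real n * \<bar>\<epsilon>\<bar>"
      by (simp add: abs_mult mult_right_mono)
    then have "real_of_int k * \<epsilon> \<in> {-r..r}" using assms(5) by auto
    then show ?thesis unfolding S_def supnorm_on_def by (rule cSUP_upper[OF _ bdd])
  qed
  have eq: "vn n \<gamma>2 \<epsilon> - vn n \<gamma>1 \<epsilon> = (1 / \<epsilon>) *\<^sub>R (\<Sum>k\<in>K. pcoef n k *\<^sub>R d (real_of_int k * \<epsilon>))"
    unfolding vn_def d_def K_def
    by (simp add: scaleR_diff_right[symmetric] sum_subtractf[symmetric])
  have "norm (\<Sum>k\<in>K. pcoef n k *\<^sub>R d (real_of_int k * \<epsilon>)) \<le> (\<Sum>k\<in>K. \<bar>pcoef n k\<bar> * norm (d (real_of_int k * \<epsilon>)))"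
    by (rule norm_sum[THEN order_trans]) simp
  also have "\<dots> \<le> (\<Sum>k\<in>K. \<bar>pcoef n k\<bar> * S)"
    by (rule sum_mono) (simp add: bnd mult_left_mono)
  also have "\<dots> = harm n * S"
    unfolding sum_distrib_right[symmetric] K_def sum_abs_pcoef ..
  finally have "norm (\<Sum>k\<in>K. pcoef n k *\<^sub>R d (real_of_int k * \<epsilon>)) \<le> harm n * S" .
  then have "norm (vn n \<gamma>2 \<epsilon> - vn n \<gamma>1 \<epsilon>) \<le> (1 / \<bar>\<epsilon>\<bar>) * (harm n * S)"
    unfolding eq by (simp add: divide_right_mono)
  then show ?thesis by (simp add: S_def d_def mult.assoc)
qed

end
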